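(* Let $f:[0,\infty)\to[0,\infty)$ be convex with $f(1)=f'(1)=0$, and suppose there exists $c>1$ such that $\frac{f(M)}{M^2}\le\frac{f(t)}{t^2}$ for all $M\ge t\ge c$. Then for any probability measures $\mu,\nu$ on a measurable space $\mathcal X$ with $\nu\ll\mu$ and any $M\ge c$ with $f(M)>0$, $$\frac{\mathrm{ICov}_M(\nu\|\mu)}{M}\le\frac{c^2}{M}+\frac{M\cdot D_f(\nu\|\mu)}{f(M)}.$$
   Context: $\mathrm{Cov}_t(\nu\|\mu)=\nu(\{x:\frac{d\nu}{d\mu}(x)\ge t\})$, $\mathrm{ICov}_M(\nu\|\mu)=\int_0^M\mathrm{Cov}_t(\nu\|\mu)\,dt$, and $D_f(\nu\|\mu)=\mathbb E_{X\sim\mu}[f(\frac{d\nu}{d\mu}(X))]$. *)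

theory Defs
  imports "HOL-Probability.Probability"
begin

text \<open>Radon-Nikodym derivative d nu / d mu, as a real number
  (it is finite mu-almost everywhere when nu is a finite measure with nu << mu).\<close>
definition rn_dens :: "'a measure \<Rightarrow> 'a measure \<Rightarrow> 'a \<Rightarrow> real" where
  "rn_dens \<nu> \<mu> x = enn2real (RN_deriv \<mu> \<nu> x)"

definition Cov :: "real \<Rightarrow> 'a measure \<Rightarrow> 'a measure \<Rightarrow> real" where
  "Cov t \<nu> \<mu> = measure \<nu> {x \<in> space \<nu>. rn_dens \<nu> \<mu> x \<ge> t}"

definition ICov :: "real \<Rightarrow> 'a measure \<Rightarrow> 'a measure \<Rightarrow> real" where
  "ICov M \<nu> \<mu> = (LBINT t:{0..M}. Cov t \<nu> \<mu>)"

definition Df :: "(real \<Rightarrow> real) \<Rightarrow> 'a measure \<Rightarrow> 'a measure \<Rightarrow> ennreal" where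
  "Df f \<nu> \<mu> = (\<integral>\<^sup>+ x. ennreal (f (rn_dens \<nu> \<mu> x)) \<partial>\<mu>)"

end

theory Submission
  imports Defs
begin

lemma pointwise:
  fixes f :: "real \<Rightarrow> real" and c M r :: real
  assumes f_convex: "convex_on {0..} f"
    and f_nonneg: "\<And>x. x \<ge> 0 \<Longrightarrow> f x \<ge> 0"
    and f1: "f 1 = 0"
    and c_gt: "c > 1"
    and f_ratio: "\<And>M t. c \<le> t \<Longrightarrow> t \<le> M \<Longrightarrow> f M / M\<^sup>2 \<le> f t / t\<^sup>2"
    and M_ge: "M \<ge> c"
    and fM: "f M > 0"
    and r: "r \<ge> 0"
  shows "r * min M r / M \<le> c\<^sup>2 / M * r + M / f M * f r"
proof -
  have M0: "M > 0" using M_ge c_gt by linarith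
  have fr: "f r \<ge> 0" using f_nonneg r by auto
  consider "r \<le> c" | "c \<le> r" "r \<le> M" | "M \<le> r" by linarith
  then show ?thesis
  proof cases
    case 1
    have "r * min M r \<le> r * c" using 1 r by (simp add: mult_left_mono)
    also have "\<dots> \<le> r * c\<^sup>2" using c_gt r
      by (intro mult_left_mono) (auto simp: power2_eq_square)
    finally have "r * min M r / M \<le> c\<^sup>2 / M * r" using M0
      by (simp add: divide_right_mono mult.commute)
    moreover have "M / f M * f r \<ge> 0" using M0 fM fr by simp
    ultimately show ?thesis by linarith
  next
    case 2
    have rpos: "r > 0" using 2 c_gt by linarith
    have "f M / M\<^sup>2 \<le> f r / r\<^sup>2" using f_ratio 2 by auto
    hence "f M * r\<^sup>2 \<le> f r * M\<^sup>2" using M0 rpos by (simp add: field_simps)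
    hence "r * r / M \<le> M / f M * f r" using M0 fM
      by (simp add: field_simps power2_eq_square)
    moreover have "c\<^sup>2 / M * r \<ge> 0" using M0 r by simp
    moreover have "min M r = r" using 2 by simp
    ultimately show ?thesis by simp
  next
    case 3
    have M1: "M > 1" using M_ge c_gt by linarith
    show ?thesis
    proof (cases "r = M")
      case True
      thus ?thesis using M0 fM r by (simp add: power2_eq_square)
    next
      case False
      hence rM: "r > M" using 3 by simp
      define t where "t = (M - 1) / (r - 1)"
      have t0: "t \<ge> 0" "t \<le> 1" using rM M1 by (auto simp: t_def field_simps)
      have "f ((1 - t) *\<^sub>R 1 + t *\<^sub>R r) \<le> (1 - t) * f 1 + t * f r"
        using convex_onD[OF f_convex, of t 1 r] t0 r by auto
      moreover have "(1 - t) *\<^sub>R 1 + t *\<^sub>R r = M"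
      proof -
        have "t * (r - 1) = M - 1" using rM M1 by (simp add: t_def)
        thus ?thesis by (simp add: algebra_simps)
      qed
      ultimately have fMle: "f M \<le> t * f r" using f1 by simp
      have "r * f M \<le> r * t * f r" using fMle r by (metis mult.assoc mult_left_mono)
      also have "\<dots> \<le> M * f r"
      proof -
        have "r * t \<le> M" using rM M1 by (simp add: t_def field_simps)
        thus ?thesis using fr by (simp add: mult_right_mono)
      qed
      finally have "r * f M \<le> M * f r" .
      hence "r * M / M \<le> M / f M * f r" using M0 fM by (simp add: field_simps)
      moreover have "c\<^sup>2 / M * r \<ge> 0" using M0 r by simp
      moreover have "min M r = M" using 3 by simp
      ultimately show ?thesis by simp
    qed
  qed
qed


theorem lemma24:
  fixes f :: "real \<Rightarrow> real" and c M :: real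
    and \<mu> \<nu> :: "'a measure"
  assumes f_convex: "convex_on {0..} f"
    and f_nonneg: "\<And>x. x \<ge> 0 \<Longrightarrow> f x \<ge> 0"
    and f1: "f 1 = 0"
    and f'1: "(f has_real_derivative 0) (at 1)"
    and c_gt: "c > 1"
    and f_ratio: "\<And>M t. c \<le> t \<Longrightarrow> t \<le> M \<Longrightarrow> f M / M\<^sup>2 \<le> f t / t\<^sup>2"
    and mu: "prob_space \<mu>"
    and nu: "prob_space \<nu>"
    and sets_eq: "sets \<nu> = sets \<mu>"
    and ac: "absolutely_continuous \<mu> \<nu>"
    and M_ge: "M \<ge> c"
    and fM: "f M > 0"
  shows "ennreal (ICov M \<nu> \<mu> / M) \<le> ennreal (c\<^sup>2 / M) + ennreal (M / f M) * Df f \<nu> \<mu>"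
proof (cases "set_integrable lborel {0..M} (\<lambda>t. Cov t \<nu> \<mu>)")
  case False
  hence "ICov M \<nu> \<mu> = 0"
    unfolding ICov_def set_lebesgue_integral_def set_integrable_def
    by (simp add: not_integrable_integral_eq)
  thus ?thesis by simp
next
  case True
  interpret mu: prob_space \<mu> by (rule mu)
  interpret nu: prob_space \<nu> by (rule nu)
  interpret pr: pair_sigma_finite \<nu> lborel ..
  define r where "r = rn_dens \<nu> \<mu>"
  have M0: "M > 0" using M_ge c_gt by linarith
  have r_meas_mu[measurable]: "r \<in> borel_measurable \<mu>"
    unfolding r_def rn_dens_def[abs_def] by measurable
  have r_meas[measurable]: "r \<in> borel_measurable \<nu>"
    using r_meas_mu measurable_cong_sets[OF sets_eq refl] by blast
  have r0: "\<And>x. r x \<ge> 0" unfolding r_def rn_dens_def by simp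
  have Cov_nonneg: "\<And>t. Cov t \<nu> \<mu> \<ge> 0" unfolding Cov_def by simp
  have ICov_nonneg: "ICov M \<nu> \<mu> \<ge> 0"
    unfolding ICov_def set_lebesgue_integral_def
    by (rule integral_nonneg_AE) (auto simp: Cov_nonneg)
  define h where "h = (\<lambda>x t. ennreal (if 0 \<le> t \<and> t \<le> M \<and> t \<le> r x then 1 else 0))"
  have h_meas: "case_prod h \<in> borel_measurable (\<nu> \<Otimes>\<^sub>M lborel)"
  proof -
    have h_eq: "case_prod h = (\<lambda>p. ennreal (if 0 \<le> snd p \<and> snd p \<le> M \<and> snd p \<le> r (fst p) then 1 else 0))"
      by (simp add: h_def fun_eq_iff split_beta')
    show ?thesis unfolding h_eq by measurable
  qed
  have step1: "ennreal (ICov M \<nu> \<mu>) = (\<integral>\<^sup>+ t. ennreal (indicator {0..M} t * Cov t \<nu> \<mu>) \<partial>lborel)"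
    unfolding ICov_def set_lebesgue_integral_def
    using True unfolding set_integrable_def
    by (subst nn_integral_eq_integral) (auto simp: Cov_nonneg)
  also have "\<dots> = (\<integral>\<^sup>+ t. (\<integral>\<^sup>+ x. h x t \<partial>\<nu>) \<partial>lborel)"
  proof (rule nn_integral_cong)
    fix t :: real
    show "ennreal (indicator {0..M} t * Cov t \<nu> \<mu>) = (\<integral>\<^sup>+ x. h x t \<partial>\<nu>)"
    proof (cases "t \<in> {0..M}")
      case True
      have S: "{x \<in> space \<nu>. t \<le> r x} \<in> sets \<nu>" by measurable
      have "(\<integral>\<^sup>+ x. h x t \<partial>\<nu>) = (\<integral>\<^sup>+ x. indicator {x \<in> space \<nu>. t \<le> r x} x \<partial>\<nu>)"
        by (rule nn_integral_cong) (use True in \<open>simp add: h_def indicator_def\<close>)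
      also have "\<dots> = emeasure \<nu> {x \<in> space \<nu>. t \<le> r x}" using S by simp
      also have "\<dots> = ennreal (Cov t \<nu> \<mu>)"
        unfolding Cov_def r_def by (simp add: nu.emeasure_eq_measure)
      finally show ?thesis using True by simp
    next
      case False
      hence "\<And>x. h x t = 0" unfolding h_def by auto
      thus ?thesis using False by simp
    qed
  qed
  also have "\<dots> = (\<integral>\<^sup>+ x. (\<integral>\<^sup>+ t. h x t \<partial>lborel) \<partial>\<nu>)"
    by (rule pr.Fubini'[OF h_meas])
  also have "\<dots> = (\<integral>\<^sup>+ x. ennreal (min M (r x)) \<partial>\<nu>)"
  proof (rule nn_integral_cong)
    fix x
    have "(\<integral>\<^sup>+ t. h x t \<partial>lborel) = (\<integral>\<^sup>+ t. indicator {0..min M (r x)} t \<partial>lborel)"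
      by (rule nn_integral_cong) (simp add: h_def indicator_def)
    also have "\<dots> = ennreal (min M (r x))" using r0[of x] M0 by simp
    finally show "(\<integral>\<^sup>+ t. h x t \<partial>lborel) = ennreal (min M (r x))" .
  qed
  also have "\<dots> = (\<integral>\<^sup>+ x. RN_deriv \<mu> \<nu> x * ennreal (min M (r x)) \<partial>\<mu>)"
    by (rule mu.RN_deriv_nn_integral[OF ac sets_eq]) measurable
  finally have eq1: "ennreal (ICov M \<nu> \<mu>) = (\<integral>\<^sup>+ x. RN_deriv \<mu> \<nu> x * ennreal (min M (r x)) \<partial>\<mu>)" .
  define fb where "fb = (\<lambda>y. if y \<in> {0<..} then f y else f 0)"
  have fb_meas: "fb \<in> borel_measurable borel"
    unfolding fb_def
  proof (rule borel_measurable_continuous_on_if)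
    show "continuous_on {0<..} f"
      by (rule convex_on_continuous) (auto intro: convex_on_subset[OF f_convex])
  qed auto
  have fr_eq: "\<And>x. f (r x) = fb (r x)" unfolding fb_def using r0
    by (metis greaterThan_iff order_less_le)
  have fr_meas[measurable]: "(\<lambda>x. f (r x)) \<in> borel_measurable \<mu>"
    unfolding fr_eq using fb_meas r_meas_mu by (simp add: measurable_compose)
  have RN1: "(\<integral>\<^sup>+ x. RN_deriv \<mu> \<nu> x \<partial>\<mu>) = 1"
  proof -
    have "(\<integral>\<^sup>+ x. 1 \<partial>\<nu>) = (\<integral>\<^sup>+ x. RN_deriv \<mu> \<nu> x * 1 \<partial>\<mu>)"
      by (rule mu.RN_deriv_nn_integral[OF ac sets_eq]) measurable
    thus ?thesis by (simp add: nu.emeasure_space_1)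
  qed
  have "ennreal (ICov M \<nu> \<mu> / M) = ennreal (ICov M \<nu> \<mu>) * ennreal (1 / M)"
    using M0 by (simp add: ennreal_mult''[symmetric])
  also have "\<dots> = (\<integral>\<^sup>+ x. RN_deriv \<mu> \<nu> x * ennreal (min M (r x)) * ennreal (1 / M) \<partial>\<mu>)"
    unfolding eq1 by (rule nn_integral_multc[symmetric]) measurable
  also have "\<dots> \<le> (\<integral>\<^sup>+ x. ennreal (c\<^sup>2 / M) * RN_deriv \<mu> \<nu> x + ennreal (M / f M) * ennreal (f (r x)) \<partial>\<mu>)"
  proof (rule nn_integral_mono)
    fix x
    show "RN_deriv \<mu> \<nu> x * ennreal (min M (r x)) * ennreal (1 / M)
      \<le> ennreal (c\<^sup>2 / M) * RN_deriv \<mu> \<nu> x + ennreal (M / f M) * ennreal (f (r x))"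
    proof (cases "RN_deriv \<mu> \<nu> x = \<top>")
      case True
      hence "r x = 0" unfolding r_def rn_dens_def by simp
      thus ?thesis using M0 by simp
    next
      case False
      hence RN: "RN_deriv \<mu> \<nu> x = ennreal (r x)" unfolding r_def rn_dens_def
        by (simp add: less_top)
      have pw: "r x * min M (r x) / M \<le> c\<^sup>2 / M * r x + M / f M * f (r x)"
        by (rule pointwise[OF f_convex f_nonneg f1 c_gt f_ratio M_ge fM r0])
      have "RN_deriv \<mu> \<nu> x * ennreal (min M (r x)) * ennreal (1 / M)
          = ennreal (r x * min M (r x) / M)"
        unfolding RN using r0[of x] M0 by (simp add: ennreal_mult[symmetric])
      also have "\<dots> \<le> ennreal (c\<^sup>2 / M * r x + M / f M * f (r x))"
        using pw by (rule ennreal_leI)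
      also have "\<dots> = ennreal (c\<^sup>2 / M) * RN_deriv \<mu> \<nu> x + ennreal (M / f M) * ennreal (f (r x))"
      proof -
        have a: "0 \<le> c\<^sup>2 / M" using M0 by simp
        have b: "0 \<le> M / f M" using M0 fM by simp
        have "ennreal (c\<^sup>2 / M * r x + M / f M * f (r x))
            = ennreal (c\<^sup>2 / M * r x) + ennreal (M / f M * f (r x))"
          using a b r0[of x] f_nonneg[OF r0[of x]] by (intro ennreal_plus mult_nonneg_nonneg)
        also have "\<dots> = ennreal (c\<^sup>2 / M) * ennreal (r x) + ennreal (M / f M) * ennreal (f (r x))"
          by (simp only: ennreal_mult'[OF a] ennreal_mult'[OF b])
        finally show ?thesis unfolding RN .
      qed
      finally show ?thesis .
    qed
  qed
  also have "\<dots> = ennreal (c\<^sup>2 / M) * (\<integral>\<^sup>+ x. RN_deriv \<mu> \<nu> x \<partial>\<mu>)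
      + ennreal (M / f M) * (\<integral>\<^sup>+ x. ennreal (f (r x)) \<partial>\<mu>)"
    by (subst nn_integral_add) (auto simp: nn_integral_cmult)
  also have "\<dots> = ennreal (c\<^sup>2 / M) + ennreal (M / f M) * Df f \<nu> \<mu>"
    unfolding RN1 Df_def r_def by simp
  finally show ?thesis .
qed

end
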